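(* Let $P\in\Delta$ be such that the marginal distribution $p$ of $X$ has full support on $\mathcal X$. Then $\widetilde{UI}(X:Z\setminus Y)=0$ if and only if $Z$ has no unique information about $X$ with respect to $Y$, i.e. if and only if for every finite set $\mathcal A$ and every function $u:\mathcal X\times\mathcal A\to\mathbb R$ one has $R(\kappa,p,u)\ge R(\mu,p,u)$.
   Context: $X,Y,Z$ are random variables with finite state spaces $\mathcal X,\mathcal Y,\mathcal Z$ and joint distribution $P\in\Delta$, where $\Delta$ is the set of probability distributions on $\mathcal X\times\mathcal Y\times\mathcal Z$. $\Delta_P=\{Q\in\Delta: Q(X=x,Y=y)=P(X=x,Y=y)\text{ and }Q(X=x,Z=z)=P(X=x,Z=z)\ \forall x,y,z\}$, and $\widetilde{UI}(X:Z\setminus Y)=\min_{Q\in\Delta_P}MI_Q(X:Z|Y)$ (mutual information computed w.r.t. $Q$). Let $p(x)=P(X=x)$, and let $\kappa(x;y)=P(Y=y|X=x)$, $\mu(x;z)=P(Z=z|X=x)$ be the row-stochastic channel matrices. A decision problem consists of a finite action set $\mathcal A$ and a reward function $u:\mathcal X\times\mathcal A\to\mathbb R$. For a channel $\nu\in[0,1]^{\mathcal X\times\mathcal W}$ (to a finite set $\mathcal W$), the maximal expected reward is $R(\nu,p,u)=\sum_{w\in\mathcal W}\max_{a\in\mathcal A}\sum_{x\in\mathcal X}p(x)\nu(x;w)u(x,a)$, i.e. the expected reward of an agent who observes the output $w$ of the channel and then chooses an action maximizing the posterior expected reward $\sum_x P(X=x|W=w)u(x,a)$. *)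

theory Defs
  imports "HOL-Analysis.Analysis"
begin

definition is_dist :: "('x::finite \<Rightarrow> 'y::finite \<Rightarrow> 'z::finite \<Rightarrow> real) \<Rightarrow> bool" where
  "is_dist P \<longleftrightarrow> (\<forall>x y z. 0 \<le> P x y z) \<and> (\<Sum>x\<in>UNIV. \<Sum>y\<in>UNIV. \<Sum>z\<in>UNIV. P x y z) = 1"

definition margXY :: "('x::finite \<Rightarrow> 'y::finite \<Rightarrow> 'z::finite \<Rightarrow> real) \<Rightarrow> 'x \<Rightarrow> 'y \<Rightarrow> real" where
  "margXY P x y = (\<Sum>z\<in>UNIV. P x y z)"

definition margXZ :: "('x::finite \<Rightarrow> 'y::finite \<Rightarrow> 'z::finite \<Rightarrow> real) \<Rightarrow> 'x \<Rightarrow> 'z \<Rightarrow> real" where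
  "margXZ P x z = (\<Sum>y\<in>UNIV. P x y z)"

definition margYZ :: "('x::finite \<Rightarrow> 'y::finite \<Rightarrow> 'z::finite \<Rightarrow> real) \<Rightarrow> 'y \<Rightarrow> 'z \<Rightarrow> real" where
  "margYZ P y z = (\<Sum>x\<in>UNIV. P x y z)"

definition margX :: "('x::finite \<Rightarrow> 'y::finite \<Rightarrow> 'z::finite \<Rightarrow> real) \<Rightarrow> 'x \<Rightarrow> real" where
  "margX P x = (\<Sum>y\<in>UNIV. \<Sum>z\<in>UNIV. P x y z)"

definition margY :: "('x::finite \<Rightarrow> 'y::finite \<Rightarrow> 'z::finite \<Rightarrow> real) \<Rightarrow> 'y \<Rightarrow> real" where
  "margY P y = (\<Sum>x\<in>UNIV. \<Sum>z\<in>UNIV. P x y z)"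

definition DeltaP :: "('x::finite \<Rightarrow> 'y::finite \<Rightarrow> 'z::finite \<Rightarrow> real) \<Rightarrow> ('x \<Rightarrow> 'y \<Rightarrow> 'z \<Rightarrow> real) set" where
  "DeltaP P = {Q. is_dist Q \<and> margXY Q = margXY P \<and> margXZ Q = margXZ P}"

definition cond_MI :: "('x::finite \<Rightarrow> 'y::finite \<Rightarrow> 'z::finite \<Rightarrow> real) \<Rightarrow> real" where
  "cond_MI Q = (\<Sum>x\<in>UNIV. \<Sum>y\<in>UNIV. \<Sum>z\<in>UNIV.
      if Q x y z = 0 then 0
      else Q x y z * log 2 (Q x y z * margY Q y / (margXY Q x y * margYZ Q y z)))"

text \<open>UI tilde (X : Z \ Y) = min over Delta_P of MI_Q(X:Z|Y) (the minimum exists; written as Inf).\<close>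
definition UI_tilde :: "('x::finite \<Rightarrow> 'y::finite \<Rightarrow> 'z::finite \<Rightarrow> real) \<Rightarrow> real" where
  "UI_tilde P = Inf (cond_MI ` DeltaP P)"

definition kappa :: "('x::finite \<Rightarrow> 'y::finite \<Rightarrow> 'z::finite \<Rightarrow> real) \<Rightarrow> 'x \<Rightarrow> 'y \<Rightarrow> real" where
  "kappa P x y = margXY P x y / margX P x"

definition mu :: "('x::finite \<Rightarrow> 'y::finite \<Rightarrow> 'z::finite \<Rightarrow> real) \<Rightarrow> 'x \<Rightarrow> 'z \<Rightarrow> real" where
  "mu P x z = margXZ P x z / margX P x"

definition max_reward :: "'a set \<Rightarrow> ('x::finite \<Rightarrow> 'w::finite \<Rightarrow> real) \<Rightarrow> ('x \<Rightarrow> real) \<Rightarrow> ('x \<Rightarrow> 'a \<Rightarrow> real) \<Rightarrow> real" where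
  "max_reward A \<nu> p u = (\<Sum>w\<in>UNIV. Max ((\<lambda>a. \<Sum>x\<in>UNIV. p x * \<nu> x w * u x a) ` A))"

end

theory Submission
  imports Defs
begin




definition Rj :: "'a set \<Rightarrow> ('x::finite \<Rightarrow> 'w::finite \<Rightarrow> real) \<Rightarrow> ('x \<Rightarrow> 'a \<Rightarrow> real) \<Rightarrow> real" where
 "Rj A J u = (\<Sum>w\<in>UNIV. Max ((\<lambda>a. \<Sum>x\<in>UNIV. J x w * u x a) ` A))"

lemma max_reward_kappa:
  assumes "\<forall>x. margX P x > 0"
  shows "max_reward A (kappa P) (margX P) u = Rj A (margXY P) u"
  unfolding max_reward_def Rj_def kappa_def using assms
  by (intro sum.cong refl arg_cong[where f=Max] image_cong) (auto intro!: sum.cong simp: less_imp_neq[symmetric])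

lemma max_reward_mu:
  assumes "\<forall>x. margX P x > 0"
  shows "max_reward A (mu P) (margX P) u = Rj A (margXZ P) u"
  unfolding max_reward_def Rj_def mu_def using assms
  by (intro sum.cong refl arg_cong[where f=Max] image_cong) (auto intro!: sum.cong simp: less_imp_neq[symmetric])

lemma garble_le:
  fixes J :: "'x::finite \<Rightarrow> 'y::finite \<Rightarrow> real" and lam :: "'y \<Rightarrow> 'z::finite \<Rightarrow> real"
  assumes A: "finite A" "A \<noteq> {}"
    and lam0: "\<And>y z. lam y z \<ge> 0"
    and lam1: "\<And>y. (\<Sum>z\<in>UNIV. lam y z) = 1 \<or> (\<forall>x. J x y = 0)"
  shows "Rj A (\<lambda>x z. \<Sum>y\<in>UNIV. J x y * lam y z) u \<le> Rj A J u"
proof -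
  define M where "M y = Max ((\<lambda>a. \<Sum>x\<in>UNIV. J x y * u x a) ` A)" for y
  have step: "Max ((\<lambda>a. \<Sum>x\<in>UNIV. (\<Sum>y\<in>UNIV. J x y * lam y z) * u x a) ` A) \<le> (\<Sum>y\<in>UNIV. lam y z * M y)" for z
  proof -
   have "\<forall>a\<in>A. (\<Sum>x\<in>UNIV. (\<Sum>y\<in>UNIV. J x y * lam y z) * u x a) \<le> (\<Sum>y\<in>UNIV. lam y z * M y)"
   proof
    fix a assume a: "a \<in> A"
    have "(\<Sum>x\<in>UNIV. (\<Sum>y\<in>UNIV. J x y * lam y z) * u x a) = (\<Sum>x\<in>UNIV. \<Sum>y\<in>UNIV. J x y * lam y z * u x a)"
      by (simp add: sum_distrib_right)
    also have "\<dots> = (\<Sum>y\<in>UNIV. \<Sum>x\<in>UNIV. J x y * lam y z * u x a)"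
      by (rule sum.swap)
    also have "\<dots> = (\<Sum>y\<in>UNIV. lam y z * (\<Sum>x\<in>UNIV. J x y * u x a))"
      by (simp add: sum_distrib_left mult_ac)
    finally have "(\<Sum>x\<in>UNIV. (\<Sum>y\<in>UNIV. J x y * lam y z) * u x a) = (\<Sum>y\<in>UNIV. lam y z * (\<Sum>x\<in>UNIV. J x y * u x a))" .
    also have "\<dots> \<le> (\<Sum>y\<in>UNIV. lam y z * M y)"
      by (intro sum_mono mult_left_mono lam0) (auto simp: M_def a A)
    finally show "(\<Sum>x\<in>UNIV. (\<Sum>y\<in>UNIV. J x y * lam y z) * u x a) \<le> (\<Sum>y\<in>UNIV. lam y z * M y)" .
  qed
   then show ?thesis using A by (simp add: Max_le_iff)
  qed
  have "Rj A (\<lambda>x z. \<Sum>y\<in>UNIV. J x y * lam y z) u \<le> (\<Sum>z\<in>UNIV. \<Sum>y\<in>UNIV. lam y z * M y)"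
    unfolding Rj_def by (intro sum_mono step)
  also have "\<dots> = (\<Sum>y\<in>UNIV. (\<Sum>z\<in>UNIV. lam y z) * M y)"
    by (subst sum.swap) (simp add: sum_distrib_right)
  also have "\<dots> = (\<Sum>y\<in>UNIV. M y)"
  proof (intro sum.cong refl)
    fix y
    show "(\<Sum>z\<in>UNIV. lam y z) * M y = M y"
    proof (cases "(\<Sum>z\<in>UNIV. lam y z) = 1")
      case False
      then have "\<forall>x. J x y = 0" using lam1 by blast
      then have "M y = 0" using A by (simp add: M_def image_constant_conv)
      then show ?thesis by simp
    qed simp
  qed
  finally show ?thesis by (simp add: Rj_def M_def)
qed

lemma lipschitz:
  fixes J J' :: "'x::finite \<Rightarrow> 'w::finite \<Rightarrow> real"
  assumes A: "finite A" "A \<noteq> {}"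
    and U: "\<And>x a. a \<in> A \<Longrightarrow> \<bar>u x a\<bar> \<le> U"
  shows "Rj A J u \<le> Rj A J' u + U * (\<Sum>w\<in>UNIV. \<Sum>x\<in>UNIV. \<bar>J x w - J' x w\<bar>)"
proof -
  have step: "Max ((\<lambda>a. \<Sum>x\<in>UNIV. J x w * u x a) ` A) \<le> Max ((\<lambda>a. \<Sum>x\<in>UNIV. J' x w * u x a) ` A) + U * (\<Sum>x\<in>UNIV. \<bar>J x w - J' x w\<bar>)" for w
  proof -
   have "\<forall>a\<in>A. (\<Sum>x\<in>UNIV. J x w * u x a) \<le> Max ((\<lambda>a. \<Sum>x\<in>UNIV. J' x w * u x a) ` A) + U * (\<Sum>x\<in>UNIV. \<bar>J x w - J' x w\<bar>)"
   proof
    fix a assume a: "a \<in> A"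
    have "(\<Sum>x\<in>UNIV. J x w * u x a) = (\<Sum>x\<in>UNIV. J' x w * u x a) + (\<Sum>x\<in>UNIV. (J x w - J' x w) * u x a)"
      by (simp add: sum.distrib[symmetric] algebra_simps)
    also have "(\<Sum>x\<in>UNIV. (J x w - J' x w) * u x a) \<le> (\<Sum>x\<in>UNIV. \<bar>J x w - J' x w\<bar> * U)"
    proof (intro sum_mono)
      fix x
      have "(J x w - J' x w) * u x a \<le> \<bar>(J x w - J' x w) * u x a\<bar>" by simp
      also have "\<dots> = \<bar>J x w - J' x w\<bar> * \<bar>u x a\<bar>" by (simp add: abs_mult)
      also have "\<dots> \<le> \<bar>J x w - J' x w\<bar> * U" by (intro mult_left_mono U a) simp
      finally show "(J x w - J' x w) * u x a \<le> \<bar>J x w - J' x w\<bar> * U" .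
    qed
    also have "(\<Sum>x\<in>UNIV. J' x w * u x a) \<le> Max ((\<lambda>a. \<Sum>x\<in>UNIV. J' x w * u x a) ` A)"
      using A a by (intro Max_ge) auto
    finally show "(\<Sum>x\<in>UNIV. J x w * u x a) \<le> Max ((\<lambda>a. \<Sum>x\<in>UNIV. J' x w * u x a) ` A) + U * (\<Sum>x\<in>UNIV. \<bar>J x w - J' x w\<bar>)"
      by (simp add: sum_distrib_left mult_ac)
   qed
   then show ?thesis using A by (simp add: Max_le_iff)
  qed
  have "Rj A J u \<le> (\<Sum>w\<in>UNIV. Max ((\<lambda>a. \<Sum>x\<in>UNIV. J' x w * u x a) ` A) + U * (\<Sum>x\<in>UNIV. \<bar>J x w - J' x w\<bar>))"
    unfolding Rj_def by (rule sum_mono[OF step])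
  then show ?thesis by (simp add: Rj_def sum.distrib sum_distrib_left)
qed



lemma pt_l1:
  fixes q r t :: real
  assumes "q \<ge> 0" "r \<ge> 0" "t > 0"
  shows "\<bar>q - r\<bar> \<le> t/2 * (sqrt q - sqrt r)^2 + (q + r) / t"
proof -
  define a where "a = sqrt q"
  define b where "b = sqrt r"
  have a0: "a \<ge> 0" and b0: "b \<ge> 0" using assms by (auto simp: a_def b_def)
  have q: "q = a^2" and r: "r = b^2" using assms by (auto simp: a_def b_def)
  have "q - r = (a - b) * (a + b)" by (simp add: q r power2_eq_square algebra_simps)
  then have "\<bar>q - r\<bar> = \<bar>a - b\<bar> * (a + b)" using a0 b0 by (simp add: abs_mult)
  also have "\<dots> \<le> t/2 * (a - b)^2 + (a+b)^2 / (2*t)"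
  proof -
    have "0 \<le> (t * \<bar>a - b\<bar> - (a + b))^2" by simp
    then have "2 * t * (\<bar>a - b\<bar> * (a + b)) \<le> t^2 * \<bar>a - b\<bar>^2 + (a+b)^2"
      by (simp add: power2_eq_square algebra_simps)
    then have "\<bar>a - b\<bar> * (a + b) \<le> (t^2 * \<bar>a - b\<bar>^2 + (a+b)^2) / (2*t)"
      using assms(3) by (simp add: field_simps)
    also have "\<dots> = t/2 * (a - b)^2 + (a+b)^2 / (2*t)"
      using assms(3) by (simp add: field_simps power2_eq_square)
    finally show ?thesis .
  qed
  also have "(a+b)^2 / (2*t) \<le> (q + r) / t"
  proof -
    have "0 \<le> (a-b)^2" by simp
    then have "2 * a * b \<le> a^2 + b^2" unfolding power2_diff by linarith
    then have "(a+b)^2 \<le> 2 * (q + r)" unfolding q r by (simp add: power2_sum)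
    then show ?thesis using assms(3) by (simp add: field_simps)
  qed
  finally show ?thesis by (simp add: a_def b_def)
qed

lemma gibbs_pt:
  fixes q r :: real
  assumes "q > 0" "r > 0"
  shows "q * log 2 (q / r) \<ge> 2 / ln 2 * (q - sqrt (q * r))"
proof -
  define s where "s = sqrt (r / q)"
  have s0: "s > 0" using assms by (simp add: s_def)
  have ss: "s^2 = r / q" using assms by (simp add: s_def)
  have "q / r = 1 / s^2" using assms ss by simp
  then have "ln (q / r) = - 2 * ln s" using s0 by (simp add: ln_div ln_realpow)
  moreover have "ln s \<le> s - 1" using s0 by (rule ln_le_minus_one)
  ultimately have "ln (q / r) \<ge> 2 * (1 - s)" by simp
  then have "q * ln (q / r) \<ge> q * (2 * (1 - s))" using assms by (intro mult_left_mono) auto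
  moreover have "q * s = sqrt (q * r)"
  proof -
    have "q * s = sqrt (q^2) * sqrt (r / q)" using assms by (simp add: s_def)
    also have "\<dots> = sqrt (q^2 * (r / q))" by (simp only: real_sqrt_mult)
    also have "q^2 * (r / q) = q * r" using assms by (simp add: power2_eq_square)
    finally show ?thesis by simp
  qed
  ultimately have "q * ln (q / r) \<ge> 2 * (q - sqrt (q * r))" by (simp add: algebra_simps)
  then have "2 * (q - sqrt (q * r)) / ln 2 \<le> q * ln (q / r) / ln 2"
    by (intro divide_right_mono) auto
  then show ?thesis by (simp add: log_def)
qed

lemma l1_bound:
  fixes q r :: "'i \<Rightarrow> real"
  assumes "finite S" "\<And>i. q i \<ge> 0" "\<And>i. r i \<ge> 0" "sum q S = 1" "sum r S \<le> 1" "t > 0"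
  shows "(\<Sum>i\<in>S. \<bar>q i - r i\<bar>) \<le> t/2 * (2 - 2 * (\<Sum>i\<in>S. sqrt (q i * r i))) + 2 / t"
proof -
  have "(\<Sum>i\<in>S. \<bar>q i - r i\<bar>) \<le> (\<Sum>i\<in>S. t/2 * (sqrt (q i) - sqrt (r i))^2 + (q i + r i) / t)"
    by (intro sum_mono pt_l1 assms)
  also have "\<dots> = t/2 * (\<Sum>i\<in>S. (sqrt (q i) - sqrt (r i))^2) + (sum q S + sum r S) / t"
    by (simp add: sum.distrib sum_distrib_left sum_divide_distrib[symmetric])
  also have "(\<Sum>i\<in>S. (sqrt (q i) - sqrt (r i))^2) = sum q S + sum r S - 2 * (\<Sum>i\<in>S. sqrt (q i * r i))"
    using assms(2,3) by (simp add: power2_diff sum.distrib sum_subtractf sum_distrib_left real_sqrt_mult mult.assoc)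
  also have "(sum q S + sum r S) / t \<le> 2 / t" using assms by (simp add: divide_right_mono)
  finally have "(\<Sum>i\<in>S. \<bar>q i - r i\<bar>) \<le> t/2 * (sum q S + sum r S - 2 * (\<Sum>i\<in>S. sqrt (q i * r i))) + 2 / t"
    by simp
  also have "\<dots> \<le> t/2 * (2 - 2 * (\<Sum>i\<in>S. sqrt (q i * r i))) + 2 / t"
    using assms by (intro add_right_mono mult_left_mono) auto
  finally show ?thesis .
qed

lemma sum3_prod:
  fixes f :: "'x::finite \<Rightarrow> 'y::finite \<Rightarrow> 'z::finite \<Rightarrow> real"
  shows "(\<Sum>x\<in>UNIV. \<Sum>y\<in>UNIV. \<Sum>z\<in>UNIV. f x y z) = (\<Sum>p\<in>UNIV. f (fst p) (fst (snd p)) (snd (snd p)))"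
proof -
  have "(\<Sum>x\<in>UNIV. \<Sum>y\<in>UNIV. \<Sum>z\<in>UNIV. f x y z) = (\<Sum>x\<in>UNIV. \<Sum>p\<in>UNIV \<times> UNIV. f x (fst p) (snd p))"
    by (simp add: sum.cartesian_product case_prod_beta)
  also have "\<dots> = (\<Sum>p\<in>UNIV \<times> (UNIV \<times> UNIV). f (fst p) (fst (snd p)) (snd (snd p)))"
    by (simp add: sum.cartesian_product case_prod_beta)
  finally show ?thesis by (simp add: UNIV_Times_UNIV)
qed



lemma dist_nonneg: "is_dist Q \<Longrightarrow> Q x y z \<ge> 0" by (simp add: is_dist_def)

lemma margs_nonneg:
  assumes "is_dist Q"
  shows "margXY Q x y \<ge> 0" "margYZ Q y z \<ge> 0" "margY Q y \<ge> 0" "margXZ Q x z \<ge> 0" "margX Q x \<ge> 0"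
  using dist_nonneg[OF assms]
  by (auto simp: margXY_def margYZ_def margY_def margXZ_def margX_def intro!: sum_nonneg)

lemma margY_XY: "margY Q y = (\<Sum>x\<in>UNIV. margXY Q x y)"
  by (simp add: margY_def margXY_def)

lemma margY_YZ: "margY Q y = (\<Sum>z\<in>UNIV. margYZ Q y z)"
  unfolding margY_def margYZ_def by (rule sum.swap)

lemma pos_margs:
  assumes "is_dist Q" "Q x y z > 0"
  shows "margXY Q x y > 0" "margYZ Q y z > 0" "margY Q y > 0"
proof -
  have n: "\<And>x y z. Q x y z \<ge> 0" using dist_nonneg[OF assms(1)] .
  have "Q x y z \<le> margXY Q x y" unfolding margXY_def
    by (rule member_le_sum) (auto simp: n)
  then show a: "margXY Q x y > 0" using assms(2) by simp
  have "Q x y z \<le> margYZ Q y z" unfolding margYZ_def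
    by (rule member_le_sum[where f="\<lambda>x. Q x y z"]) (auto simp: n)
  then show "margYZ Q y z > 0" using assms(2) by simp
  have "margXY Q x y \<le> margY Q y" unfolding margY_XY
    by (rule member_le_sum) (auto intro: margs_nonneg[OF assms(1)])
  then show "margY Q y > 0" using a by simp
qed

lemma sumR:
  assumes "is_dist Q"
  shows "(\<Sum>x\<in>UNIV. \<Sum>y\<in>UNIV. \<Sum>z\<in>UNIV. margXY Q x y * margYZ Q y z / margY Q y) = 1"
proof -
  have "(\<Sum>x\<in>UNIV. \<Sum>y\<in>UNIV. \<Sum>z\<in>UNIV. margXY Q x y * margYZ Q y z / margY Q y)
      = (\<Sum>y\<in>UNIV. (\<Sum>x\<in>UNIV. margXY Q x y) * (\<Sum>z\<in>UNIV. margYZ Q y z) / margY Q y)"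
    by (subst sum.swap) (intro sum.cong refl, simp add: sum_product sum_divide_distrib)
  also have "\<dots> = (\<Sum>y\<in>UNIV. margY Q y)"
    by (intro sum.cong refl) (simp add: margY_XY[symmetric] margY_YZ[symmetric])
  also have "\<dots> = 1" using assms unfolding is_dist_def margY_def by (subst sum.swap) simp
  finally show ?thesis .
qed

lemma cmi_lower:
  fixes Q :: "'x::finite \<Rightarrow> 'y::finite \<Rightarrow> 'z::finite \<Rightarrow> real"
  assumes Q: "is_dist Q" and t: "t > 0"
  shows "(\<Sum>x\<in>UNIV. \<Sum>y\<in>UNIV. \<Sum>z\<in>UNIV. \<bar>Q x y z - margXY Q x y * margYZ Q y z / margY Q y\<bar>)
           \<le> t/2 * (ln 2 * cond_MI Q) + 2/t"
proof -
  define R where "R x y z = margXY Q x y * margYZ Q y z / margY Q y" for x y z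
  have Rn: "R x y z \<ge> 0" for x y z unfolding R_def using margs_nonneg[OF Q] by simp
  have Qn: "Q x y z \<ge> 0" for x y z using dist_nonneg[OF Q] .
  have trm: "(if Q x y z = 0 then 0
      else Q x y z * log 2 (Q x y z * margY Q y / (margXY Q x y * margYZ Q y z)))
      \<ge> 2 / ln 2 * (Q x y z - sqrt (Q x y z * R x y z))" for x y z
  proof (cases "Q x y z = 0")
    case False
    then have qp: "Q x y z > 0" using Qn[of x y z] by simp
    note pm = pos_margs[OF Q qp]
    have Rp: "R x y z > 0" unfolding R_def using pm by simp
    have "Q x y z * margY Q y / (margXY Q x y * margYZ Q y z) = Q x y z / R x y z"
      unfolding R_def using pm by (simp add: field_simps)
    then show ?thesis using False gibbs_pt[OF qp Rp] by simp
  qed simp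
  define F where "F p = Q (fst p) (fst (snd p)) (snd (snd p))" for p
  define G where "G p = R (fst p) (fst (snd p)) (snd (snd p))" for p
  have "sum F UNIV = (\<Sum>x\<in>UNIV. \<Sum>y\<in>UNIV. \<Sum>z\<in>UNIV. Q x y z)" unfolding F_def by (simp only: sum3_prod)
  then have sQ: "sum F UNIV = 1" using Q unfolding is_dist_def by simp
  have "sum G UNIV = (\<Sum>x\<in>UNIV. \<Sum>y\<in>UNIV. \<Sum>z\<in>UNIV. R x y z)" unfolding G_def by (simp only: sum3_prod)
  then have sR: "sum G UNIV \<le> 1" using sumR[OF Q] unfolding R_def by simp
  have l1: "(\<Sum>p\<in>UNIV. \<bar>F p - G p\<bar>) \<le> t/2 * (2 - 2 * (\<Sum>p\<in>UNIV. sqrt (F p * G p))) + 2 / t"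
    by (rule l1_bound[OF _ _ _ sQ sR t]) (auto simp: F_def G_def Qn Rn)
  have "cond_MI Q \<ge> (\<Sum>x\<in>UNIV. \<Sum>y\<in>UNIV. \<Sum>z\<in>UNIV. 2 / ln 2 * (Q x y z - sqrt (Q x y z * R x y z)))"
    unfolding cond_MI_def by (intro sum_mono trm)
  also have "(\<Sum>x\<in>UNIV. \<Sum>y\<in>UNIV. \<Sum>z\<in>UNIV. 2 / ln 2 * (Q x y z - sqrt (Q x y z * R x y z)))
     = 2 / ln 2 * (sum F UNIV - (\<Sum>p\<in>UNIV. sqrt (F p * G p)))"
    unfolding sum3_prod sum_distrib_left[symmetric] sum_subtractf F_def G_def ..
  finally have "cond_MI Q \<ge> 2 / ln 2 * (1 - (\<Sum>p\<in>UNIV. sqrt (F p * G p)))" using sQ by simp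
  then have "ln 2 * cond_MI Q \<ge> 2 - 2 * (\<Sum>p\<in>UNIV. sqrt (F p * G p))"
    by (simp add: field_simps)
  then have "t/2 * (2 - 2 * (\<Sum>p\<in>UNIV. sqrt (F p * G p))) \<le> t/2 * (ln 2 * cond_MI Q)"
    using t by (intro mult_left_mono) auto
  with l1 have "(\<Sum>p\<in>UNIV. \<bar>F p - G p\<bar>) \<le> t/2 * (ln 2 * cond_MI Q) + 2/t" by simp
  then show ?thesis by (simp add: sum3_prod F_def G_def R_def)
qed



lemma P_in_DeltaP: "is_dist P \<Longrightarrow> P \<in> DeltaP P" by (simp add: DeltaP_def)

lemma dir2:
  fixes P :: "'x::finite \<Rightarrow> 'y::finite \<Rightarrow> 'z::finite \<Rightarrow> real" and u :: "'x \<Rightarrow> 'a \<Rightarrow> real"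
  assumes P: "is_dist P" and UI: "UI_tilde P = 0" and A: "finite A" "A \<noteq> {}"
  shows "Rj A (margXZ P) u \<le> Rj A (margXY P) u"
proof (rule ccontr)
  assume neg: "\<not> Rj A (margXZ P) u \<le> Rj A (margXY P) u"
  define \<delta> where "\<delta> = Rj A (margXZ P) u - Rj A (margXY P) u"
  have \<delta>: "\<delta> > 0" using neg by (simp add: \<delta>_def)
  define U where "U = 1 + (\<Sum>x\<in>UNIV. \<Sum>a\<in>A. \<bar>u x a\<bar>)"
  have "(\<Sum>x\<in>UNIV. \<Sum>a\<in>A. \<bar>u x a\<bar>) \<ge> 0" by (intro sum_nonneg) auto
  then have U0: "U > 0" unfolding U_def by simp
  have Ub: "\<bar>u x a\<bar> \<le> U" if "a \<in> A" for x a
  proof -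
    have "\<bar>u x a\<bar> \<le> (\<Sum>a\<in>A. \<bar>u x a\<bar>)" using A that by (intro member_le_sum) auto
    also have "\<dots> \<le> (\<Sum>x\<in>UNIV. \<Sum>a\<in>A. \<bar>u x a\<bar>)"
      by (rule member_le_sum[where f="\<lambda>x. \<Sum>a\<in>A. \<bar>u x a\<bar>"]) (auto intro: sum_nonneg)
    finally show ?thesis unfolding U_def by simp
  qed
  define t where "t = 4 * U / \<delta>"
  have t0: "t > 0" using U0 \<delta> by (simp add: t_def)
  define c where "c = \<delta> / (U * t * ln 2)"
  have c0: "c > 0" using U0 \<delta> t0 by (simp add: c_def)
  have bound: "c \<le> cond_MI Q" if QD: "Q \<in> DeltaP P" for Q
  proof -
    have Q: "is_dist Q" and mXY: "margXY Q = margXY P" and mXZ: "margXZ Q = margXZ P"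
      using QD by (auto simp: DeltaP_def)
    define lam where "lam y z = margYZ Q y z / margY Q y" for y z
    define J' where "J' x z = (\<Sum>y\<in>UNIV. margXY P x y * lam y z)" for x z
    have g: "Rj A J' u \<le> Rj A (margXY P) u"
      unfolding J'_def
    proof (rule garble_le[OF A])
      show "lam y z \<ge> 0" for y z unfolding lam_def using margs_nonneg[OF Q] by simp
      show "(\<Sum>z\<in>UNIV. lam y z) = 1 \<or> (\<forall>x. margXY P x y = 0)" for y
      proof (cases "margY Q y = 0")
        case True
        have "\<forall>x\<in>UNIV. margXY Q x y = 0"
          using True margs_nonneg[OF Q] unfolding margY_XY
          by (subst sum_nonneg_eq_0_iff[symmetric]) auto
        then show ?thesis using mXY by simp
      next
        case False
        then show ?thesis unfolding lam_def by (simp add: sum_divide_distrib[symmetric] margY_YZ[symmetric])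
      qed
    qed
    have l: "Rj A (margXZ P) u \<le> Rj A J' u + U * (\<Sum>z\<in>UNIV. \<Sum>x\<in>UNIV. \<bar>margXZ P x z - J' x z\<bar>)"
      by (rule lipschitz[OF A Ub])
    have "(\<Sum>z\<in>UNIV. \<Sum>x\<in>UNIV. \<bar>margXZ P x z - J' x z\<bar>)
        \<le> (\<Sum>z\<in>UNIV. \<Sum>x\<in>UNIV. \<Sum>y\<in>UNIV. \<bar>Q x y z - margXY Q x y * margYZ Q y z / margY Q y\<bar>)"
    proof (intro sum_mono)
      fix z x
      have "margXZ P x z - J' x z = (\<Sum>y\<in>UNIV. Q x y z - margXY Q x y * margYZ Q y z / margY Q y)"
        unfolding mXZ[symmetric] J'_def lam_def mXY[symmetric]
        by (simp add: margXZ_def sum_subtractf)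
      then show "\<bar>margXZ P x z - J' x z\<bar> \<le> (\<Sum>y\<in>UNIV. \<bar>Q x y z - margXY Q x y * margYZ Q y z / margY Q y\<bar>)"
        by (simp add: sum_abs)
    qed
    also have "\<dots> = (\<Sum>x\<in>UNIV. \<Sum>y\<in>UNIV. \<Sum>z\<in>UNIV. \<bar>Q x y z - margXY Q x y * margYZ Q y z / margY Q y\<bar>)"
      by (subst sum.swap) (rule sum.cong[OF refl], rule sum.swap)
    also have "\<dots> \<le> t/2 * (ln 2 * cond_MI Q) + 2/t" by (rule cmi_lower[OF Q t0])
    finally have "U * (\<Sum>z\<in>UNIV. \<Sum>x\<in>UNIV. \<bar>margXZ P x z - J' x z\<bar>) \<le> U * (t/2 * (ln 2 * cond_MI Q) + 2/t)"
      using U0 by (intro mult_left_mono) auto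
    with g l have "\<delta> \<le> U * (t/2 * (ln 2 * cond_MI Q) + 2/t)" unfolding \<delta>_def by simp
    then have e1: "\<delta> \<le> U * (t/2 * (ln 2 * cond_MI Q)) + U * (2/t)" by (simp add: distrib_left)
    have e2: "U * (2/t) = \<delta> / 2" using U0 \<delta> by (simp add: t_def field_simps)
    have e3: "U * (t/2 * (ln 2 * cond_MI Q)) = (U * t * ln 2 * cond_MI Q) / 2" by simp
    from e1 e2 e3 have "\<delta> \<le> (U * t * ln 2) * cond_MI Q" by linarith
    then show ?thesis unfolding c_def using U0 t0 by (simp add: divide_le_eq mult_ac)
  qed
  have "c \<le> UI_tilde P" unfolding UI_tilde_def
    by (rule cInf_greatest) (use P_in_DeltaP[OF P] bound in auto)
  with UI c0 show False by simp
qed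



lemma cmi_nonneg:
  fixes Q :: "'x::finite \<Rightarrow> 'y::finite \<Rightarrow> 'z::finite \<Rightarrow> real"
  assumes Q: "is_dist Q"
  shows "cond_MI Q \<ge> 0"
proof -
  define R where "R x y z = margXY Q x y * margYZ Q y z / margY Q y" for x y z
  have Rn: "R x y z \<ge> 0" for x y z unfolding R_def using margs_nonneg[OF Q] by simp
  have Qn: "Q x y z \<ge> 0" for x y z using dist_nonneg[OF Q] .
  have trm: "(if Q x y z = 0 then 0
      else Q x y z * log 2 (Q x y z * margY Q y / (margXY Q x y * margYZ Q y z)))
      \<ge> 2 / ln 2 * (Q x y z - sqrt (Q x y z * R x y z))" for x y z
  proof (cases "Q x y z = 0")
    case False
    then have qp: "Q x y z > 0" using Qn[of x y z] by simp
    note pm = pos_margs[OF Q qp]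
    have Rp: "R x y z > 0" unfolding R_def using pm by simp
    have "Q x y z * margY Q y / (margXY Q x y * margYZ Q y z) = Q x y z / R x y z"
      unfolding R_def using pm by (simp add: field_simps)
    then show ?thesis using False gibbs_pt[OF qp Rp] by simp
  qed simp
  have "cond_MI Q \<ge> (\<Sum>x\<in>UNIV. \<Sum>y\<in>UNIV. \<Sum>z\<in>UNIV. 2 / ln 2 * (Q x y z - sqrt (Q x y z * R x y z)))"
    unfolding cond_MI_def by (intro sum_mono trm)
  also have "(\<Sum>x\<in>UNIV. \<Sum>y\<in>UNIV. \<Sum>z\<in>UNIV. 2 / ln 2 * (Q x y z - sqrt (Q x y z * R x y z)))
     \<ge> (\<Sum>x\<in>UNIV. \<Sum>y\<in>UNIV. \<Sum>z\<in>UNIV. 2 / ln 2 * ((Q x y z - R x y z) / 2))"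
  proof (intro sum_mono mult_left_mono)
    fix x y z
    have "sqrt (Q x y z * R x y z) \<le> (Q x y z + R x y z) / 2" by (rule arith_geo_mean_sqrt[OF Qn Rn])
    then show "(Q x y z - R x y z) / 2 \<le> Q x y z - sqrt (Q x y z * R x y z)" by simp
  qed simp
  also have "(\<Sum>x\<in>UNIV. \<Sum>y\<in>UNIV. \<Sum>z\<in>UNIV. 2 / ln 2 * ((Q x y z - R x y z) / 2))
     = 1 / ln 2 * ((\<Sum>x\<in>UNIV. \<Sum>y\<in>UNIV. \<Sum>z\<in>UNIV. Q x y z) - (\<Sum>x\<in>UNIV. \<Sum>y\<in>UNIV. \<Sum>z\<in>UNIV. R x y z))"
    by (simp add: sum_distrib_left sum_subtractf sum_divide_distrib[symmetric] diff_divide_distrib)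
  also have "\<dots> = 0" using Q sumR[OF Q] by (simp add: is_dist_def R_def)
  finally show ?thesis .
qed

lemma garbling_UI0:
  fixes P :: "'x::finite \<Rightarrow> 'y::finite \<Rightarrow> 'z::finite \<Rightarrow> real" and lam :: "'y \<Rightarrow> 'z \<Rightarrow> real"
  assumes P: "is_dist P" and l0: "\<And>y z. lam y z \<ge> 0" and l1: "\<And>y. (\<Sum>z\<in>UNIV. lam y z) = 1"
    and lg: "\<And>x z. (\<Sum>y\<in>UNIV. margXY P x y * lam y z) = margXZ P x z"
  shows "UI_tilde P = 0"
proof -
  define Q where "Q x y z = margXY P x y * lam y z" for x y z
  have Qn: "Q x y z \<ge> 0" for x y z unfolding Q_def using margs_nonneg[OF P] l0 by simp
  have mXY: "margXY Q = margXY P"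
    by (intro ext) (simp add: margXY_def Q_def sum_distrib_left[symmetric] l1)
  have mXZ: "margXZ Q = margXZ P"
    by (intro ext) (simp add: margXZ_def Q_def lg)
  have Qd: "is_dist Q" unfolding is_dist_def
  proof
    show "\<forall>x y z. 0 \<le> Q x y z" using Qn by blast
    have "(\<Sum>x\<in>UNIV. \<Sum>y\<in>UNIV. \<Sum>z\<in>UNIV. Q x y z) = (\<Sum>x\<in>UNIV. \<Sum>y\<in>UNIV. margXY Q x y)"
      by (simp add: margXY_def)
    also have "\<dots> = (\<Sum>x\<in>UNIV. \<Sum>y\<in>UNIV. \<Sum>z\<in>UNIV. P x y z)" by (simp add: mXY margXY_def)
    finally show "(\<Sum>x\<in>UNIV. \<Sum>y\<in>UNIV. \<Sum>z\<in>UNIV. Q x y z) = 1" using P by (simp add: is_dist_def)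
  qed
  have QD: "Q \<in> DeltaP P" using Qd mXY mXZ by (simp add: DeltaP_def)
  have mY: "margY Q y = margY P y" for y by (simp add: margY_XY mXY)
  have mYZ: "margYZ Q y z = margY P y * lam y z" for y z
    by (simp add: margYZ_def Q_def margY_XY sum_distrib_right)
  have c0: "cond_MI Q = 0" unfolding cond_MI_def
  proof (intro sum.neutral ballI)
    fix x y z
    show "(if Q x y z = 0 then 0
      else Q x y z * log 2 (Q x y z * margY Q y / (margXY Q x y * margYZ Q y z))) = 0"
    proof (cases "Q x y z = 0")
      case False
      then have qp: "Q x y z > 0" using Qn[of x y z] by simp
      note pm = pos_margs[OF Qd qp]
      have lnz: "lam y z \<noteq> 0" using qp unfolding Q_def by auto
      have r1: "Q x y z * margY Q y / (margXY Q x y * margYZ Q y z) = 1"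
        using pm lnz unfolding mYZ mY mXY unfolding Q_def by (simp add: field_simps)
      show ?thesis using False unfolding r1 by simp
    qed simp
  qed
  show ?thesis unfolding UI_tilde_def
    by (rule cInf_eq_minimum) (use QD c0 cmi_nonneg in \<open>auto simp: DeltaP_def\<close>)
qed


lemma sum_pair_UNIV:
  fixes h :: "'a::finite \<times> 'b::finite \<Rightarrow> real"
  shows "(\<Sum>p\<in>UNIV. h p) = (\<Sum>x\<in>UNIV. \<Sum>z\<in>UNIV. h (x, z))"
  by (simp add: UNIV_Times_UNIV[symmetric] sum.cartesian_product del: UNIV_Times_UNIV)

lemma dir1:
  fixes P :: "'x::finite \<Rightarrow> 'y::finite \<Rightarrow> 'z::finite \<Rightarrow> real"
  assumes P: "is_dist P"
    and H: "\<forall>(A::nat set) (u::'x \<Rightarrow> nat \<Rightarrow> real). finite A \<and> A \<noteq> {} \<longrightarrow>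
       Rj A (margXY P) u \<ge> Rj A (margXZ P) u"
  shows "UI_tilde P = 0"
proof -
  define Mf :: "('y \<Rightarrow> 'z) \<Rightarrow> real^('x \<times> 'z)"
    where "Mf f = (\<chi> p. \<Sum>y\<in>UNIV. margXY P (fst p) y * (if f y = snd p then 1 else 0))" for f
  define m :: "real^('x \<times> 'z)" where "m = (\<chi> p. margXZ P (fst p) (snd p))"
  define S where "S = convex hull (range Mf)"
  have finR: "finite (range Mf)" by simp
  show ?thesis
  proof (cases "m \<in> S")
    case True
    then obtain w where w0: "\<forall>v\<in>range Mf. 0 \<le> w v" and w1: "sum w (range Mf) = 1"
      and wm: "(\<Sum>v\<in>range Mf. w v *\<^sub>R v) = m"
      unfolding S_def convex_hull_finite[OF finR] by blast
    define g where "g v = (SOME f. Mf f = v)" for v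
    have g: "Mf (g v) = v" if "v \<in> range Mf" for v
    proof -
      from that obtain f0 where "Mf f0 = v" by blast
      then show ?thesis unfolding g_def by (rule someI[where P="\<lambda>f. Mf f = v"])
    qed
    define lam where "lam y z = (\<Sum>v\<in>range Mf. w v * (if g v y = z then 1 else 0))" for y z
    show ?thesis
    proof (rule garbling_UI0[OF P, of lam])
      show "0 \<le> lam y z" for y z using w0 by (auto simp: lam_def intro!: sum_nonneg)
      show "(\<Sum>z\<in>UNIV. lam y z) = 1" for y
        unfolding lam_def by (subst sum.swap) (simp add: w1 sum_distrib_left[symmetric])
      show "(\<Sum>y\<in>UNIV. margXY P x y * lam y z) = margXZ P x z" for x z
      proof -
        have "(\<Sum>y\<in>UNIV. margXY P x y * lam y z) = (\<Sum>v\<in>range Mf. w v * (Mf (g v)) $ (x, z))"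
        proof -
          have "(\<Sum>y\<in>UNIV. margXY P x y * lam y z) = (\<Sum>y\<in>UNIV. \<Sum>v\<in>range Mf. w v * (margXY P x y * (if g v y = z then 1 else 0)))"
            unfolding lam_def by (simp add: sum_distrib_left mult_ac)
          also have "\<dots> = (\<Sum>v\<in>range Mf. \<Sum>y\<in>UNIV. w v * (margXY P x y * (if g v y = z then 1 else 0)))"
            by (rule sum.swap)
          also have "\<dots> = (\<Sum>v\<in>range Mf. w v * (Mf (g v)) $ (x, z))"
            unfolding Mf_def by (simp add: sum_distrib_left)
          finally show ?thesis .
        qed
        also have "\<dots> = (\<Sum>v\<in>range Mf. w v * v $ (x, z))"
          by (intro sum.cong refl) (simp add: g)
        also have "\<dots> = m $ (x, z)" using wm[symmetric] by simp
        also have "\<dots> = margXZ P x z" by (simp add: m_def)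
        finally show ?thesis .
      qed
    qed
  next
    case False
    have cS: "convex S" unfolding S_def by (rule convex_convex_hull)
    have clS: "closed S" unfolding S_def
      by (rule compact_imp_closed, rule finite_imp_compact_convex_hull[OF finR])
    obtain a b where ab1: "inner a m < b" and ab2: "\<forall>v\<in>S. b < inner a v"
      using separating_hyperplane_closed_point[OF cS clS False] by blast
    define A where "A = range (to_nat :: 'z \<Rightarrow> nat)"
    define u where "u x n = - (a $ (x, from_nat n :: 'z))" for x n
    have A: "finite A" "A \<noteq> {}" by (auto simp: A_def)
    have uz: "u x (to_nat z) = - (a $ (x, z))" for x z by (simp add: u_def)
    have low: "Rj A (margXZ P) u \<ge> - inner a m"
    proof -
      have "inner a m = (\<Sum>x\<in>UNIV. \<Sum>z\<in>UNIV. a $ (x, z) * margXZ P x z)"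
        unfolding inner_vec_def m_def by (simp add: sum_pair_UNIV)
      also have "\<dots> = (\<Sum>z\<in>UNIV. \<Sum>x\<in>UNIV. a $ (x, z) * margXZ P x z)"
        by (rule sum.swap)
      finally have "- inner a m = (\<Sum>z\<in>UNIV. \<Sum>x\<in>UNIV. margXZ P x z * u x (to_nat (z::'z)))"
        unfolding uz by (simp add: sum_negf[symmetric] mult_ac)
      also have "\<dots> \<le> Rj A (margXZ P) u" unfolding Rj_def
        by (intro sum_mono Max_ge) (auto simp: A_def)
      finally show ?thesis .
    qed
    have "\<forall>y. \<exists>z. Max ((\<lambda>n. \<Sum>x\<in>UNIV. margXY P x y * u x n) ` A) = (\<Sum>x\<in>UNIV. margXY P x y * u x (to_nat (z::'z)))"
    proof
      fix y
      have "Max ((\<lambda>n. \<Sum>x\<in>UNIV. margXY P x y * u x n) ` A) \<in> (\<lambda>n. \<Sum>x\<in>UNIV. margXY P x y * u x n) ` A"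
        using A by (intro Max_in) auto
      then obtain n where n: "n \<in> A" "Max ((\<lambda>n. \<Sum>x\<in>UNIV. margXY P x y * u x n) ` A) = (\<Sum>x\<in>UNIV. margXY P x y * u x n)"
        by blast
      obtain z' :: 'z where "n = to_nat z'" using n(1) unfolding A_def by blast
      with n(2) show "\<exists>z. Max ((\<lambda>n. \<Sum>x\<in>UNIV. margXY P x y * u x n) ` A) = (\<Sum>x\<in>UNIV. margXY P x y * u x (to_nat (z::'z)))"
        by blast
    qed
    then have "\<exists>f :: 'y \<Rightarrow> 'z. \<forall>y. Max ((\<lambda>n. \<Sum>x\<in>UNIV. margXY P x y * u x n) ` A) = (\<Sum>x\<in>UNIV. margXY P x y * u x (to_nat (f y)))"
      by (rule choice)
    then obtain f :: "'y \<Rightarrow> 'z" where f0: "\<forall>y. Max ((\<lambda>n. \<Sum>x\<in>UNIV. margXY P x y * u x n) ` A) = (\<Sum>x\<in>UNIV. margXY P x y * u x (to_nat (f y)))"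
      by (elim exE)
    have f: "\<And>y. Max ((\<lambda>n. \<Sum>x\<in>UNIV. margXY P x y * u x n) ` A) = (\<Sum>x\<in>UNIV. margXY P x y * u x (to_nat (f y)))"
      using f0 by (rule spec)
    have "Rj A (margXY P) u = (\<Sum>y\<in>UNIV. \<Sum>x\<in>UNIV. margXY P x y * u x (to_nat (f y)))"
      unfolding Rj_def f ..
    also have "\<dots> = - inner a (Mf f)"
    proof -
      have "inner a (Mf f) = (\<Sum>x\<in>UNIV. \<Sum>z\<in>UNIV. \<Sum>y\<in>UNIV. a $ (x, z) * (margXY P x y * (if f y = z then 1 else 0)))"
        unfolding inner_vec_def Mf_def by (simp add: sum_pair_UNIV sum_distrib_left)
      also have "\<dots> = (\<Sum>x\<in>UNIV. \<Sum>y\<in>UNIV. \<Sum>z\<in>UNIV. a $ (x, z) * (margXY P x y * (if f y = z then 1 else 0)))"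
        by (intro sum.cong refl) (rule sum.swap)
      also have "\<dots> = (\<Sum>x\<in>UNIV. \<Sum>y\<in>UNIV. a $ (x, f y) * margXY P x y)"
        by (simp add: if_distrib cong: if_cong)
      also have "\<dots> = (\<Sum>y\<in>UNIV. \<Sum>x\<in>UNIV. a $ (x, f y) * margXY P x y)"
        by (rule sum.swap)
      finally show ?thesis unfolding uz
        by (simp add: sum_negf[symmetric] mult_ac)
    qed
    finally have eq: "Rj A (margXY P) u = - inner a (Mf f)" .
    have "Mf f \<in> S" unfolding S_def by (rule hull_inc) simp
    then have "Rj A (margXY P) u < Rj A (margXZ P) u" using eq low ab1 ab2 by force
    with H A show ?thesis by (meson not_le)
  qed
qed

theorem mainTheorem4:
  fixes P :: "'x::finite \<Rightarrow> 'y::finite \<Rightarrow> 'z::finite \<Rightarrow> real"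
  assumes "is_dist P"
    and "\<forall>x. margX P x > 0"
  shows "UI_tilde P = 0 \<longleftrightarrow>
    (\<forall>(A::nat set) (u::'x \<Rightarrow> nat \<Rightarrow> real). finite A \<and> A \<noteq> {} \<longrightarrow>
       max_reward A (kappa P) (margX P) u \<ge> max_reward A (mu P) (margX P) u)"
  unfolding max_reward_kappa[OF assms(2)] max_reward_mu[OF assms(2)]
  using dir1[OF assms(1)] dir2[OF assms(1)] by blast

end
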